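(* Let $\mathscr B$ be a family of boxes in $\mathbb R^2$ with $\nu(\mathscr B)$ finite. Suppose there exist two lines $l_1,l_2$ parallel to the $x$-axis such that every box of $\mathscr B$ intersects at least one of $l_1,l_2$. Then $\tau(\mathscr B)\leqslant \left[\frac{3\nu(\mathscr B)}{2}\right]$.
   Context: A box in $\mathbb R^2$ is a set $[a_1,b_1]\times[a_2,b_2]$ with sides parallel to the coordinate axes. For a family $\mathscr B$ of boxes, $\nu(\mathscr B)$ is the maximal number of pairwise disjoint members of $\mathscr B$, and $\tau(\mathscr B)$ is the minimal number of points in a set meeting every member of $\mathscr B$. $[x]$ denotes the integer part of $x$. *)

theory Defs
  imports Main "HOL-Library.Extended_Nat"
begin

definition is_box :: "(real \<times> real) set \<Rightarrow> bool" where
  "is_box S \<longleftrightarrow> (\<exists>a1 b1 a2 b2. a1 \<le> b1 \<and> a2 \<le> b2 \<and> S = {a1..b1} \<times> {a2..b2})"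

definition nu :: "(real \<times> real) set set \<Rightarrow> enat" where
  "nu B = Sup {enat (card S) | S. S \<subseteq> B \<and> finite S \<and> pairwise disjnt S}"

text \<open>tau: minimal number of points of a set meeting every member
  (infinity if no finite piercing set exists).\<close>
definition tau :: "(real \<times> real) set set \<Rightarrow> enat" where
  "tau B = Inf {enat (card P) | P. finite P \<and> (\<forall>b\<in>B. P \<inter> b \<noteq> {})}"

definition hline :: "real \<Rightarrow> (real \<times> real) set" where
  "hline c = {p. snd p = c}"

end

theory Submission
  imports Defs
begin

definition lft :: "(real \<times> real) set \<Rightarrow> real" where "lft b = Inf (fst ` b)"
definition rgt :: "(real \<times> real) set \<Rightarrow> real" where "rgt b = Sup (fst ` b)"
definition lo :: "(real \<times> real) set \<Rightarrow> real" where "lo b = Inf (snd ` b)"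
definition hi :: "(real \<times> real) set \<Rightarrow> real" where "hi b = Sup (snd ` b)"

lemma box_repr:
  assumes "is_box b"
  shows "b = {lft b..rgt b} \<times> {lo b..hi b}" "lft b \<le> rgt b" "lo b \<le> hi b"
proof -
  obtain a1 b1 a2 b2 where h: "a1 \<le> b1" "a2 \<le> b2" "b = {a1..b1} \<times> {a2..b2}"
    using assms unfolding is_box_def by blast
  have "lft b = a1" "rgt b = b1" "lo b = a2" "hi b = b2"
    using h by (auto simp: lft_def rgt_def lo_def hi_def)
  then show "b = {lft b..rgt b} \<times> {lo b..hi b}" "lft b \<le> rgt b" "lo b \<le> hi b"
    using h by auto
qed

lemma box_mem:
  assumes "is_box b"
  shows "x \<in> b \<longleftrightarrow> lft b \<le> fst x \<and> fst x \<le> rgt b \<and> lo b \<le> snd x \<and> snd x \<le> hi b"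
  using box_repr(1)[OF assms] by (cases x) (metis atLeastAtMost_iff fst_conv mem_Sigma_iff snd_conv)

lemma box_disj:
  assumes "is_box b" "is_box b'"
  shows "b \<inter> b' = {} \<longleftrightarrow> (rgt b < lft b' \<or> rgt b' < lft b \<or> hi b < lo b' \<or> hi b' < lo b)"
proof
  assume d: "b \<inter> b' = {}"
  show "rgt b < lft b' \<or> rgt b' < lft b \<or> hi b < lo b' \<or> hi b' < lo b"
  proof (rule ccontr)
    assume "\<not> ?thesis"
    then have "(max (lft b) (lft b'), max (lo b) (lo b')) \<in> b \<inter> b'"
      using box_repr(2,3)[OF assms(1)] box_repr(2,3)[OF assms(2)]
      by (auto simp: box_mem[OF assms(1)] box_mem[OF assms(2)])
    with d show False by blast
  qed
next
  assume "rgt b < lft b' \<or> rgt b' < lft b \<or> hi b < lo b' \<or> hi b' < lo b"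
  then show "b \<inter> b' = {}"
    by (auto simp: box_mem[OF assms(1)] box_mem[OF assms(2)])
qed

lemma box_hline:
  assumes "is_box b" "b \<inter> hline c \<noteq> {}"
  shows "lo b \<le> c \<and> c \<le> hi b"
  using assms by (auto simp: box_mem[OF assms(1)] hline_def)

lemma helly:
  assumes "\<forall>b\<in>L. is_box b" "L \<noteq> {}" "\<forall>b\<in>L. \<forall>b'\<in>L. b \<inter> b' \<noteq> {}"
  shows "\<exists>p. \<forall>b\<in>L. p \<in> b"
proof -
  obtain b0 where b0: "b0 \<in> L" using assms(2) by blast
  have le1: "lft b \<le> rgt b'" if "b \<in> L" "b' \<in> L" for b b'
  proof -
    have "b' \<inter> b \<noteq> {}" using assms(3) that by blast
    then show ?thesis using box_disj[of b' b] assms(1) that by force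
  qed
  have le2: "lo b \<le> hi b'" if "b \<in> L" "b' \<in> L" for b b'
  proof -
    have "b' \<inter> b \<noteq> {}" using assms(3) that by blast
    then show ?thesis using box_disj[of b' b] assms(1) that by force
  qed
  define x where "x = Sup (lft ` L)"
  define y where "y = Sup (lo ` L)"
  have bx: "bdd_above (lft ` L)" using le1 b0 by (auto simp: bdd_above_def)
  have by': "bdd_above (lo ` L)" using le2 b0 by (auto simp: bdd_above_def)
  have "(x, y) \<in> b" if "b \<in> L" for b
  proof -
    have "lft b \<le> x" unfolding x_def using bx that by (simp add: cSup_upper)
    moreover have "x \<le> rgt b" unfolding x_def using assms(2) le1 that
      by (auto intro!: cSup_least)
    moreover have "lo b \<le> y" unfolding y_def using by' that by (simp add: cSup_upper)
    moreover have "y \<le> hi b" unfolding y_def using assms(2) le2 that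
      by (auto intro!: cSup_least)
    ultimately show ?thesis using assms(1) that by (simp add: box_mem)
  qed
  then show ?thesis by blast
qed

lemma add_pair:
  assumes boxes: "\<forall>b\<in>B. is_box b"
    and bnd: "\<forall>S\<subseteq>B. finite S \<and> pairwise disjnt S \<longrightarrow> card S \<le> n"
    and b1: "b1 \<in> B" and b2: "b2 \<in> B" and d: "b1 \<inter> b2 = {}"
    and S: "S \<subseteq> B" "finite S" "pairwise disjnt S"
    and lt: "\<forall>b\<in>S. rgt b1 < lft b \<and> rgt b2 < lft b"
  shows "card S + 2 \<le> n"
proof -
  have bb1: "is_box b1" and bb2: "is_box b2" using boxes b1 b2 by auto
  have n1: "b1 \<notin> S" using lt box_repr(2)[OF bb1] by fastforce
  have n2: "b2 \<notin> S" using lt box_repr(2)[OF bb2] by fastforce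
  have ne: "b1 \<noteq> b2"
  proof
    assume e: "b1 = b2"
    have "(lft b1, lo b1) \<in> b1" using box_repr(2,3)[OF bb1] by (simp add: box_mem[OF bb1])
    then show False using d e by blast
  qed
  have dj1: "disjnt b1 b" if "b \<in> S" for b
    using lt that box_disj[OF bb1, of b] boxes S(1) by (auto simp: disjnt_def)
  have dj2: "disjnt b2 b" if "b \<in> S" for b
    using lt that box_disj[OF bb2, of b] boxes S(1) by (auto simp: disjnt_def)
  have "pairwise disjnt (insert b1 (insert b2 S))"
    using S(3) dj1 dj2 d by (auto simp: pairwise_insert disjnt_def)
  moreover have "insert b1 (insert b2 S) \<subseteq> B" using S b1 b2 by auto
  moreover have "finite (insert b1 (insert b2 S))" using S by auto
  ultimately have "card (insert b1 (insert b2 S)) \<le> n" using bnd by blast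
  then show ?thesis using n1 n2 ne S(2) by simp
qed

lemma main:
  "\<forall>B. (\<forall>b\<in>B. is_box b) \<longrightarrow> (\<forall>b\<in>B. b \<inter> hline c1 \<noteq> {} \<or> b \<inter> hline c2 \<noteq> {})
     \<longrightarrow> (\<forall>S\<subseteq>B. finite S \<and> pairwise disjnt S \<longrightarrow> card S \<le> n)
     \<longrightarrow> (\<exists>P. finite P \<and> card P \<le> 3 * n div 2 \<and> (\<forall>b\<in>B. P \<inter> b \<noteq> {}))"
proof (induction n rule: less_induct)
  case (less n)
  show ?case
  proof (intro allI impI)
    fix B :: "(real \<times> real) set set"
    assume boxes: "\<forall>b\<in>B. is_box b"
      and lines: "\<forall>b\<in>B. b \<inter> hline c1 \<noteq> {} \<or> b \<inter> hline c2 \<noteq> {}"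
      and bnd: "\<forall>S\<subseteq>B. finite S \<and> pairwise disjnt S \<longrightarrow> card S \<le> n"
    show "\<exists>P. finite P \<and> card P \<le> 3 * n div 2 \<and> (\<forall>b\<in>B. P \<inter> b \<noteq> {})"
    proof (cases "B = {}")
      case True
      then show ?thesis by (intro exI[of _ "{}"]) auto
    next
      case Bne: False
      then obtain b0 where b0: "b0 \<in> B" by blast
      have "{b0} \<subseteq> B" "finite {b0}" "pairwise disjnt {b0}" using b0 by auto
      then have "card {b0} \<le> n" using bnd by blast
      then have n1: "1 \<le> n" by simp
      define T where "T = {t. \<exists>b1\<in>B. \<exists>b2\<in>B. rgt b1 \<le> t \<and> rgt b2 \<le> t \<and> b1 \<inter> b2 = {}}"
      show ?thesis
      proof (cases "T = {}")
        case True
        have pw: "\<forall>b\<in>B. \<forall>b'\<in>B. b \<inter> b' \<noteq> {}"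
        proof (intro ballI notI)
          fix b b' assume h: "b \<in> B" "b' \<in> B" "b \<inter> b' = {}"
          have "rgt b \<le> max (rgt b) (rgt b')" "rgt b' \<le> max (rgt b) (rgt b')" by simp_all
            then have "max (rgt b) (rgt b') \<in> T" using h unfolding T_def by blast
          then show False using True by blast
        qed
        have "\<exists>p. \<forall>b\<in>B. p \<in> b" by (rule helly[OF boxes Bne pw])
        then obtain p where "\<forall>b\<in>B. p \<in> b" by blast
        then show ?thesis using n1 by (intro exI[of _ "{p}"]) auto
      next
        case Tne: False
        then obtain tt b1 b2 where bs: "b1 \<in> B" "b2 \<in> B" "b1 \<inter> b2 = {}" "rgt b1 \<le> tt" "rgt b2 \<le> tt"
          unfolding T_def by blast
        have n2: "2 \<le> n" using add_pair[OF boxes bnd bs(1,2,3), of "{}"] by simp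
        have key: "card S + 2 \<le> n" if S: "S \<subseteq> B" "finite S" "pairwise disjnt S"
             and t: "t \<in> T" "\<forall>b\<in>S. t < lft b" for S t
        proof -
          from t(1) obtain a1 a2 where a: "a1 \<in> B" "a2 \<in> B" "rgt a1 \<le> t" "rgt a2 \<le> t" "a1 \<inter> a2 = {}"
            unfolding T_def by blast
          have "\<forall>b\<in>S. rgt a1 < lft b \<and> rgt a2 < lft b" using a(3,4) t(2)
            by (meson order_le_less_trans)
          then show ?thesis by (rule add_pair[OF boxes bnd a(1,2,5) S])
        qed
        show ?thesis
        proof (cases "bdd_below T")
          case False
          have bd2: "\<forall>S\<subseteq>B. finite S \<and> pairwise disjnt S \<longrightarrow> card S \<le> n - 2"
          proof (intro allI impI)
            fix S assume S: "S \<subseteq> B" "finite S \<and> pairwise disjnt S"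
            show "card S \<le> n - 2"
            proof (cases "S = {}")
              case True then show ?thesis by simp
            next
              case False
              define l where "l = Min (lft ` S)"
              have "\<not> (\<forall>t\<in>T. l \<le> t)" using \<open>\<not> bdd_below T\<close> unfolding bdd_below_def by blast
              then have "\<exists>t\<in>T. t < l" by (auto simp: not_le)
              then obtain t where t: "t \<in> T" "t < l" by blast
              have "\<forall>b\<in>S. t < lft b"
              proof
                fix b assume "b \<in> S"
                then have "Min (lft ` S) \<le> lft b" using S by (intro Min_le) auto
                then show "t < lft b" using t unfolding l_def by linarith
              qed
              moreover have "finite S" "pairwise disjnt S" using S by auto
              ultimately have "card S + 2 \<le> n" using key[OF S(1) _ _ t(1)] by blast
              then show ?thesis by simp
            qed
          qed
          have "n - 2 < n" using n2 by simp
          then have "\<exists>P. finite P \<and> card P \<le> 3 * (n-2) div 2 \<and> (\<forall>b\<in>B. P \<inter> b \<noteq> {})"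
            using less.IH[of "n-2", THEN spec[of _ B]] boxes lines bd2 by blast
          then obtain P where "finite P" "card P \<le> 3 * (n-2) div 2" "\<forall>b\<in>B. P \<inter> b \<noteq> {}"
            by blast
          moreover have "3 * (n-2) div 2 \<le> 3 * n div 2" by (intro div_le_mono) simp
          ultimately show ?thesis by (meson order_trans)
        next
          case bdd: True
          define t0 where "t0 = Inf T"
          define L where "L = {b\<in>B. rgt b < t0}"
          define R where "R = {b\<in>B. t0 < lft b}"
          have Lpw: "\<forall>b\<in>L. \<forall>b'\<in>L. b \<inter> b' \<noteq> {}"
          proof (intro ballI notI)
            fix b b' assume h: "b \<in> L" "b' \<in> L" "b \<inter> b' = {}"
            have "rgt b \<le> max (rgt b) (rgt b')" "rgt b' \<le> max (rgt b) (rgt b')" by simp_all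
            then have "max (rgt b) (rgt b') \<in> T" using h unfolding T_def L_def by blast
            then have "t0 \<le> max (rgt b) (rgt b')" unfolding t0_def using bdd by (simp add: cInf_lower)
            then show False using h(1,2) unfolding L_def by auto
          qed
          obtain PL where PL: "finite PL" "card PL \<le> 1" "\<forall>b\<in>L. PL \<inter> b \<noteq> {}"
          proof (cases "L = {}")
            case True then show ?thesis using that[of "{}"] by auto
          next
            case False
            then obtain p where "\<forall>b\<in>L. p \<in> b" using helly[of L] Lpw boxes unfolding L_def by blast
            then show ?thesis using that[of "{p}"] by auto
          qed
          have Rb: "\<forall>S\<subseteq>R. finite S \<and> pairwise disjnt S \<longrightarrow> card S \<le> n - 2"
          proof (intro allI impI)
            fix S assume S: "S \<subseteq> R" "finite S \<and> pairwise disjnt S"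
            have SB: "S \<subseteq> B" using S unfolding R_def by auto
            show "card S \<le> n - 2"
            proof (cases "S = {}")
              case True then show ?thesis by simp
            next
              case False
              define l where "l = Min (lft ` S)"
              have "t0 < l" unfolding l_def using False S unfolding R_def by (subst Min_gr_iff) auto
              then obtain t where t: "t \<in> T" "t < l" unfolding t0_def using cInf_less_iff[OF Tne bdd] by blast
              have "\<forall>b\<in>S. t < lft b"
              proof
                fix b assume "b \<in> S"
                then have "Min (lft ` S) \<le> lft b" using S by (intro Min_le) auto
                then show "t < lft b" using t unfolding l_def by linarith
              qed
              moreover have "finite S" "pairwise disjnt S" using S by auto
              ultimately have "card S + 2 \<le> n" using key[OF SB _ _ t(1)] by blast
              then show ?thesis by simp
            qed
          qed
          have "n - 2 < n" using n2 by simp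
          moreover have "\<forall>b\<in>R. is_box b" "\<forall>b\<in>R. b \<inter> hline c1 \<noteq> {} \<or> b \<inter> hline c2 \<noteq> {}"
            using boxes lines unfolding R_def by auto
          ultimately have "\<exists>P. finite P \<and> card P \<le> 3 * (n-2) div 2 \<and> (\<forall>b\<in>R. P \<inter> b \<noteq> {})"
            using less.IH[of "n-2", THEN spec[of _ R]] Rb by blast
          then obtain PR where PR: "finite PR" "card PR \<le> 3 * (n-2) div 2" "\<forall>b\<in>R. PR \<inter> b \<noteq> {}"
            by blast
          define P where "P = PR \<union> PL \<union> {(t0, c1), (t0, c2)}"
          have "card P \<le> card PR + card PL + card {(t0, c1), (t0, c2)}"
            unfolding P_def by (meson card_Un_le le_trans add_le_mono order_refl)
          also have "\<dots> \<le> 3 * (n-2) div 2 + 1 + 2"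
            using PR PL by (intro add_le_mono) (auto simp: card_insert_if)
          also have "\<dots> = 3 * n div 2" using n2 by simp
          finally have cP: "card P \<le> 3 * n div 2" .
          have "P \<inter> b \<noteq> {}" if b: "b \<in> B" for b
          proof (cases "rgt b < t0")
            case True then show ?thesis using PL b unfolding P_def L_def by blast
          next
            case nr: False
            show ?thesis
            proof (cases "t0 < lft b")
              case True then show ?thesis using PR b unfolding P_def R_def by blast
            next
              case False
              have bb: "is_box b" using boxes b by auto
              from lines b have "(lo b \<le> c1 \<and> c1 \<le> hi b) \<or> (lo b \<le> c2 \<and> c2 \<le> hi b)"
                using box_hline[OF bb] by blast
              then have "(t0, c1) \<in> b \<or> (t0, c2) \<in> b" using nr False by (auto simp: box_mem[OF bb])
              then show ?thesis unfolding P_def by blast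
            qed
          qed
          moreover have "finite P" unfolding P_def using PR(1) PL(1) by simp
          ultimately show ?thesis using cP by blast
        qed
      qed
    qed
  qed
qed

theorem lemma2:
  fixes B :: "(real \<times> real) set set" and c1 c2 :: real
  assumes "\<forall>b\<in>B. is_box b"
    and "nu B \<noteq> \<infinity>"
    and "\<forall>b\<in>B. b \<inter> hline c1 \<noteq> {} \<or> b \<inter> hline c2 \<noteq> {}"
  shows "tau B \<le> enat ((3 * the_enat (nu B)) div 2)"
proof -
  define n where "n = the_enat (nu B)"
  have nuB: "nu B = enat n" using assms(2) unfolding n_def by auto
  have bd: "\<forall>S\<subseteq>B. finite S \<and> pairwise disjnt S \<longrightarrow> card S \<le> n"
  proof (intro allI impI)
    fix S assume "S \<subseteq> B" "finite S \<and> pairwise disjnt S"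
    then have "enat (card S) \<in> {enat (card S) | S. S \<subseteq> B \<and> finite S \<and> pairwise disjnt S}" by blast
    then have "enat (card S) \<le> nu B" unfolding nu_def by (rule Sup_upper)
    then show "card S \<le> n" using nuB by simp
  qed
  then have "\<exists>P. finite P \<and> card P \<le> 3 * n div 2 \<and> (\<forall>b\<in>B. P \<inter> b \<noteq> {})"
    using main[of c1 c2 n, THEN spec[of _ B]] assms(1,3) bd by blast
  then obtain P where P: "finite P" "card P \<le> 3 * n div 2" "\<forall>b\<in>B. P \<inter> b \<noteq> {}"
    by blast
  have "enat (card P) \<in> {enat (card P) | P. finite P \<and> (\<forall>b\<in>B. P \<inter> b \<noteq> {})}" using P by blast
  then have "tau B \<le> enat (card P)" unfolding tau_def by (rule Inf_lower)
  then show ?thesis using P(2) unfolding n_def by (meson enat_ord_simps(1) order_trans)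
qed

end
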